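(* Let $n\ge1$ and let $f_1,\dots,f_n:\mathbb{R}^d\to\mathbb{R}$ be infinitely differentiable functions whose derivatives of all orders (including order zero) are bounded and integrable, and such that $|f_i(x)|\le C_i(1+|x|^{2d})^{-1}$ for all $x\in\mathbb{R}^d$ and $i=1,\dots,n$, for constants $C_i<\infty$. Let $\xi$ be an $\mathbb{R}^d$-valued random variable with characteristic function $\varphi$, and let $s=\circledast_{i=1}^n\{\overline{\mathcal{F}[f_i]}\,\varphi\}$. Then $s\in L^1(\mathbb{R}^d)$, $\mathcal{F}[s](x)=\prod_{i=1}^n\mathbb{E}[f_i(x+\xi)]$ for all $x\in\mathbb{R}^d$, and $\sup_{y\in\mathbb{R}^d}|y|^k|s(y)|<\infty$ for every $k\in\mathbb{N}$.
   Context: $\varphi(t)=\mathbb{E}[e^{2\pi\mathbf{i}t\cdot\xi}]$; $\mathcal{F}[g](k)=\int g(x)e^{2\pi\mathbf{i}k\cdot x}dx$. For functions $g_1,\dots,g_n$, $\circledast_{i=1}^1 g_i=g_1$ and $\circledast_{i=1}^n g_i=g_n\ast\{\circledast_{i=1}^{n-1}g_i\}$ with $(g\ast h)(y)=\int g(z)h(y-z)dz$. *)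

theory Defs
  imports "HOL-Probability.Probability"
begin

fun iter_pd :: "'a::euclidean_space list \<Rightarrow> ('a \<Rightarrow> real) \<Rightarrow> 'a \<Rightarrow> real" where
  "iter_pd [] f = f"
| "iter_pd (v # vs) f = (\<lambda>x. frechet_derivative (iter_pd vs f) (at x) v)"

definition smooth_bdd_int :: "('a::euclidean_space \<Rightarrow> real) \<Rightarrow> bool" where
  "smooth_bdd_int f \<longleftrightarrow>
     (\<forall>vs \<in> lists Basis.
        (\<forall>x. iter_pd vs f differentiable (at x))
      \<and> bounded (range (iter_pd vs f))
      \<and> integrable lborel (iter_pd vs f))"

definition charfun :: "'w measure \<Rightarrow> ('w \<Rightarrow> 'a::euclidean_space) \<Rightarrow> 'a \<Rightarrow> complex" where
  "charfun M \<xi> t = (\<integral>\<omega>. exp (2 * pi * \<i> * complex_of_real (t \<bullet> \<xi> \<omega>)) \<partial>M)"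

definition fourier :: "('a::euclidean_space \<Rightarrow> complex) \<Rightarrow> 'a \<Rightarrow> complex" where
  "fourier g k = (\<integral>x. g x * exp (2 * pi * \<i> * complex_of_real (k \<bullet> x)) \<partial>lborel)"

definition conv :: "('a::euclidean_space \<Rightarrow> complex) \<Rightarrow> ('a \<Rightarrow> complex) \<Rightarrow> 'a \<Rightarrow> complex" where
  "conv g h y = (\<integral>z. g z * h (y - z) \<partial>lborel)"

text \<open>Iterated convolution: bigconv g 1 = g 1, bigconv g (n+1) = g (n+1) * bigconv g n.
  (The value at 0 is an irrelevant default.)\<close>
fun bigconv :: "(nat \<Rightarrow> 'a::euclidean_space \<Rightarrow> complex) \<Rightarrow> nat \<Rightarrow> 'a \<Rightarrow> complex" where
  "bigconv g 0 = (\<lambda>_. 0)"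
| "bigconv g (Suc 0) = g 1"
| "bigconv g (Suc (Suc n)) = conv (g (Suc (Suc n))) (bigconv g (Suc n))"

end

theory Submission
  imports Defs
begin


definition ee :: "real \<Rightarrow> complex" where "ee t = exp (2 * pi * \<i> * complex_of_real t)"

lemma norm_ee[simp]: "norm (ee t) = 1"
  unfolding ee_def by (simp add: norm_exp_eq_Re)

lemma ee_add: "ee (a + b) = ee a * ee b"
  unfolding ee_def by (simp add: distrib_left exp_add[symmetric])

lemma ee_zero[simp]: "ee 0 = 1" unfolding ee_def by simp

lemma cnj_ee: "cnj (ee t) = ee (- t)"
  unfolding ee_def by (simp add: exp_cnj)

lemma continuous_ee[continuous_intros]: "continuous_on A ee"
  unfolding ee_def by (intro continuous_intros)

lemma isCont_ee[simp]: "isCont ee t"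
  unfolding ee_def by (intro continuous_intros)

lemma ee_measurable[measurable]: "ee \<in> borel_measurable borel"
  using continuous_ee[of UNIV] by (rule borel_measurable_continuous_onI)

lemma ee_sum: "finite A \<Longrightarrow> ee (\<Sum>i\<in>A. f i) = (\<Prod>i\<in>A. ee (f i))"
  by (induct A rule: finite_induct) (auto simp: ee_add)

lemma nn_integral_affine_eucl:
  fixes f :: "'a::euclidean_space \<Rightarrow> ennreal"
  assumes [measurable]: "f \<in> borel_measurable borel" and c: "c \<noteq> 0"
  shows "(\<integral>\<^sup>+x. f x \<partial>lborel) = ennreal (\<bar>c\<bar>^DIM('a)) * (\<integral>\<^sup>+x. f (t + c *\<^sub>R x) \<partial>lborel)"
  by (subst lborel_affine[OF c, of t])
     (simp add: nn_integral_density nn_integral_distr nn_integral_cmult)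

lemma integrable_affine_eucl:
  fixes f :: "'a::euclidean_space \<Rightarrow> 'b :: {banach, second_countable_topology}"
  assumes f: "integrable lborel f" and c: "c \<noteq> 0"
  shows "integrable lborel (\<lambda>x. f (t + c *\<^sub>R x))"
  using f f[THEN borel_measurable_integrable] c unfolding integrable_iff_bounded
  by (subst (asm) nn_integral_affine_eucl[where c=c and t=t]) (auto simp: ennreal_mult_less_top)

lemma integrable_affine_eucl_iff:
  fixes f :: "'a::euclidean_space \<Rightarrow> 'b :: {banach, second_countable_topology}"
  assumes c: "c \<noteq> 0"
  shows "integrable lborel (\<lambda>x. f (t + c *\<^sub>R x)) \<longleftrightarrow> integrable lborel f"
proof
  assume "integrable lborel (\<lambda>x. f (t + c *\<^sub>R x))"
  from integrable_affine_eucl[OF this, of "1/c" "- t /\<^sub>R c"] c show "integrable lborel f"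
    by (simp add: algebra_simps)
qed (rule integrable_affine_eucl[OF _ c])

lemma integral_affine_eucl:
  fixes f :: "'a::euclidean_space \<Rightarrow> 'b :: {banach, second_countable_topology}"
  assumes c: "c \<noteq> 0"
  shows "(\<integral>x. f x \<partial>lborel) = (\<bar>c\<bar>^DIM('a)) *\<^sub>R (\<integral>x. f (t + c *\<^sub>R x) \<partial>lborel)"
proof cases
  assume f[measurable]: "integrable lborel f" then show ?thesis
    using c f f[THEN borel_measurable_integrable] f[THEN integrable_affine_eucl, of c t]
    by (subst lborel_affine[OF c, of t])
       (simp add: integral_density integral_distr)
next
  assume "\<not> integrable lborel f" with c show ?thesis
    by (simp add: integrable_affine_eucl_iff not_integrable_integral_eq)
qed

lemma integral_translate:
  fixes f :: "'a::euclidean_space \<Rightarrow> 'b :: {banach, second_countable_topology}"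
  shows "(\<integral>x. f x \<partial>lborel) = (\<integral>x. f (t + x) \<partial>lborel)"
  using integral_affine_eucl[of 1 f t] by simp

lemma integral_reflect:
  fixes f :: "'a::euclidean_space \<Rightarrow> 'b :: {banach, second_countable_topology}"
  shows "(\<integral>x. f x \<partial>lborel) = (\<integral>x. f (t - x) \<partial>lborel)"
  using integral_affine_eucl[of "-1" f t] by simp

lemma integrable_translate:
  fixes f :: "'a::euclidean_space \<Rightarrow> 'b :: {banach, second_countable_topology}"
  shows "integrable lborel f \<Longrightarrow> integrable lborel (\<lambda>x. f (t + x))"
  using integrable_affine_eucl[of f 1 t] by simp

lemma integrable_reflect:
  fixes f :: "'a::euclidean_space \<Rightarrow> 'b :: {banach, second_countable_topology}"
  shows "integrable lborel f \<Longrightarrow> integrable lborel (\<lambda>x. f (t - x))"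
  using integrable_affine_eucl[of f "-1" t] by simp

lemma sum_Basis_inner:
  fixes b :: "'a::euclidean_space"
  assumes "b \<in> Basis"
  shows "(\<Sum>b'\<in>Basis. f b' *\<^sub>R b') \<bullet> b = f b"
  using assms by (simp add: inner_sum_left inner_Basis if_distrib cong: if_cong)

lemma lborel_prod:
  fixes g :: "'a::euclidean_space \<Rightarrow> real \<Rightarrow> 'c::{real_normed_field,banach,second_countable_topology}"
  assumes int: "\<And>b. b \<in> Basis \<Longrightarrow> integrable lborel (g b)"
  shows "integrable lborel (\<lambda>x::'a. \<Prod>b\<in>Basis. g b (x \<bullet> b))"
    and "(\<integral>x. (\<Prod>b\<in>Basis. g b (x \<bullet> b)) \<partial>lborel) = (\<Prod>b\<in>Basis. integral\<^sup>L lborel (g b))"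
proof -
  interpret product_sigma_finite "\<lambda>_::'a. lborel :: real measure" by unfold_locales
  have m: "(\<lambda>f. \<Sum>b\<in>Basis. f b *\<^sub>R (b::'a)) \<in> measurable (\<Pi>\<^sub>M b\<in>Basis. lborel) borel"
    by measurable
  have eq: "(\<Prod>b\<in>Basis. g b ((\<Sum>b'\<in>Basis. f b' *\<^sub>R b') \<bullet> b)) = (\<Prod>b\<in>Basis. g b (f b))" for f
    by (intro prod.cong refl) (simp add: sum_Basis_inner)
  have pi: "integrable (\<Pi>\<^sub>M b\<in>Basis. lborel) (\<lambda>f. \<Prod>b\<in>Basis. g b (f b))"
    by (rule product_integrable_prod) (auto intro: int)
  have gm: "(\<lambda>x::'a. \<Prod>b\<in>Basis. g b (x \<bullet> b)) \<in> borel_measurable borel"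
    using int by (intro borel_measurable_prod) (auto dest!: borel_measurable_integrable)
  show "integrable lborel (\<lambda>x::'a. \<Prod>b\<in>Basis. g b (x \<bullet> b))"
    apply (subst lborel_eq)
    apply (subst integrable_distr_eq[OF m gm])
    using pi by (simp add: eq)
  show "(\<integral>x. (\<Prod>b\<in>Basis. g b (x \<bullet> b)) \<partial>lborel) = (\<Prod>b\<in>Basis. integral\<^sup>L lborel (g b))"
    apply (subst lborel_eq)
    apply (subst integral_distr[OF m gm])
    apply (simp add: eq)
    by (rule product_integral_prod) (auto intro: int)
qed



lemma gauss1_eq: "exp (- pi * v\<^sup>2) = normal_density 0 (1 / sqrt (2*pi)) v"
  unfolding normal_density_def by (simp add: power_divide real_sqrt_mult power_mult_distrib)

lemma gauss1_integrable: "integrable lborel (\<lambda>v::real. exp (- pi * v\<^sup>2))"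
  unfolding gauss1_eq by simp

lemma gauss1_c_integrable: "integrable lborel (\<lambda>v::real. complex_of_real (exp (- pi * v\<^sup>2)) * ee (v * w))"
  by (rule Bochner_Integration.integrable_bound[OF gauss1_integrable]) (auto simp: norm_mult)

lemma gauss1_ft: "(\<integral>v. complex_of_real (exp (- pi * v\<^sup>2)) * ee (v * w) \<partial>lborel) = complex_of_real (exp (- pi * w\<^sup>2))"
proof -
  define s where "s = sqrt (2 * pi)"
  have s: "s > 0" "s * s = 2 * pi" "s\<^sup>2 = 2 * pi" by (auto simp: s_def power2_eq_square)
  define t where "t = s * w"
  have "char std_normal_distribution t = complex_of_real (exp (- (t^2) / 2))"
    by (simp add: char_std_normal_distribution)
  also have "char std_normal_distribution t = (\<integral>x. std_normal_density x *\<^sub>R iexp (t * x) \<partial>lborel)"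
    unfolding char_def by (subst integral_density) auto
  also have "\<dots> = \<bar>s\<bar> *\<^sub>R (\<integral>v. std_normal_density (0 + s * v) *\<^sub>R iexp (t * (0 + s * v)) \<partial>lborel)"
    by (rule lborel_integral_real_affine) (use s in auto)
  also have "(\<lambda>v. std_normal_density (0 + s * v) *\<^sub>R iexp (t * (0 + s * v))) =
      (\<lambda>v. (1/s) *\<^sub>R (complex_of_real (exp (- pi * v\<^sup>2)) * ee (v * w)))"
  proof
    fix v
    have 1: "std_normal_density (s * v) = (1/s) * exp (- pi * v\<^sup>2)"
      unfolding std_normal_density_def using s by (simp add: s_def power_mult_distrib)
    have "t * (s * v) = (s * s) * (v * w)" by (simp add: t_def algebra_simps)
    also have "\<dots> = 2 * pi * (v * w)" using s(2) by simp
    finally have "iexp (t * (s * v)) = iexp (2 * pi * (v * w))" by (rule arg_cong)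
    also have "\<dots> = ee (v * w)" unfolding ee_def by (simp add: algebra_simps)
    finally have 2: "iexp (t * (s * v)) = ee (v * w)" .
    show "std_normal_density (0 + s * v) *\<^sub>R iexp (t * (0 + s * v)) = (1/s) *\<^sub>R (complex_of_real (exp (- pi * v\<^sup>2)) * ee (v * w))"
      using 1 2 by (simp add: scaleR_conv_of_real)
  qed
  also have "\<bar>s\<bar> *\<^sub>R (\<integral>v. (1/s) *\<^sub>R (complex_of_real (exp (- pi * v\<^sup>2)) * ee (v * w)) \<partial>lborel)
     = (\<integral>v. complex_of_real (exp (- pi * v\<^sup>2)) * ee (v * w) \<partial>lborel)"
    using s by simp
  also have "exp (- (t^2) / 2) = exp (- pi * w\<^sup>2)"
    unfolding t_def using s by (simp add: power_mult_distrib)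
  finally show ?thesis by simp
qed

definition gauss :: "'a::euclidean_space \<Rightarrow> real" where
  "gauss v = exp (- pi * (norm v)\<^sup>2)"

lemma gauss_prod: "gauss (v::'a::euclidean_space) = (\<Prod>b\<in>Basis. exp (- pi * (v \<bullet> b)\<^sup>2))"
proof -
  have "(norm v)\<^sup>2 = v \<bullet> v" by (simp add: power2_norm_eq_inner)
  also have "\<dots> = (\<Sum>b\<in>Basis. (v \<bullet> b)\<^sup>2)"
    by (subst euclidean_inner) (simp add: power2_eq_square)
  finally have "(norm v)\<^sup>2 = (\<Sum>b\<in>Basis. (v \<bullet> b)\<^sup>2)" .
  then show ?thesis unfolding gauss_def
    by (simp add: sum_distrib_left exp_sum)
qed

lemma gauss_pos: "gauss v > 0" unfolding gauss_def by simp
lemma gauss_le1: "gauss v \<le> 1" unfolding gauss_def by simp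
lemma gauss_zero[simp]: "gauss 0 = 1" unfolding gauss_def by simp
lemma gauss_minus: "gauss (- v) = gauss v" unfolding gauss_def by simp
lemma continuous_gauss[continuous_intros]: "continuous_on A gauss"
  unfolding gauss_def by (intro continuous_intros)
lemma gauss_measurable[measurable]: "gauss \<in> borel_measurable borel"
  using continuous_gauss[of UNIV] by (rule borel_measurable_continuous_onI)

lemma gauss_ft_prod:
  "complex_of_real (gauss v) * ee (v \<bullet> w) = (\<Prod>b\<in>Basis. complex_of_real (exp (- pi * (v \<bullet> b)\<^sup>2)) * ee ((v \<bullet> b) * (w \<bullet> b)))"
  by (simp add: gauss_prod prod.distrib euclidean_inner[of v w] ee_sum)

lemma gauss_integrable: "integrable lborel (\<lambda>v::'a::euclidean_space. gauss v)"
  unfolding gauss_prod by (rule lborel_prod) (rule gauss1_integrable)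

lemma gauss_ft:
  fixes w :: "'a::euclidean_space"
  shows "integrable lborel (\<lambda>v. complex_of_real (gauss v) * ee (v \<bullet> w))"
    and "(\<integral>v. complex_of_real (gauss v) * ee (v \<bullet> w) \<partial>lborel) = complex_of_real (gauss w)"
proof -
  show "integrable lborel (\<lambda>v. complex_of_real (gauss v) * ee (v \<bullet> w))"
    unfolding gauss_ft_prod
    by (rule lborel_prod(1)[where g="\<lambda>b x. complex_of_real (exp (- pi * x\<^sup>2)) * ee (x * (w \<bullet> b))"])
       (rule gauss1_c_integrable)
  show "(\<integral>v. complex_of_real (gauss v) * ee (v \<bullet> w) \<partial>lborel) = complex_of_real (gauss w)"
    unfolding gauss_ft_prod
    apply (subst lborel_prod(2)[where g="\<lambda>b x. complex_of_real (exp (- pi * x\<^sup>2)) * ee (x * (w \<bullet> b))"])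
     apply (rule gauss1_c_integrable)
    by (simp only: gauss1_ft gauss_prod of_real_prod)
qed

lemma gauss_integral: "(\<integral>v. gauss (v::'a::euclidean_space) \<partial>lborel) = 1"
proof -
  have "complex_of_real (\<integral>v. gauss (v::'a) \<partial>lborel) = (\<integral>v. complex_of_real (gauss (v::'a)) \<partial>lborel)"
    by simp
  also have "\<dots> = (\<integral>v. complex_of_real (gauss (v::'a)) * ee (v \<bullet> 0) \<partial>lborel)"
    by simp
  also have "\<dots> = 1" using gauss_ft(2)[of 0] by (simp only: gauss_zero of_real_1)
  finally show ?thesis by (metis of_real_eq_1_iff)
qed



lemma fourier_ee: "fourier g k = (\<integral>x. g x * ee (k \<bullet> x) \<partial>lborel)"
  unfolding fourier_def ee_def ..

lemma charfun_ee: "charfun M X t = (\<integral>\<omega>. ee (t \<bullet> X \<omega>) \<partial>M)"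
  unfolding charfun_def ee_def ..

definition rapid :: "('a::euclidean_space \<Rightarrow> complex) \<Rightarrow> bool" where
  "rapid g \<longleftrightarrow> g \<in> borel_measurable borel \<and> (\<forall>k. \<exists>C. \<forall>y. norm y ^ k * norm (g y) \<le> C)"

lemma my_fubini:
  fixes F :: "'a \<Rightarrow> 'b \<Rightarrow> 'c::{banach, second_countable_topology}"
  assumes "sigma_finite_measure M1" "sigma_finite_measure M2"
    and "(\<lambda>(x,y). F x y) \<in> borel_measurable (M1 \<Otimes>\<^sub>M M2)"
    and "integrable M1 (\<lambda>x. \<integral>y. norm (F x y) \<partial>M2)"
    and "AE x in M1. integrable M2 (F x)"
  shows "(\<integral>x. (\<integral>y. F x y \<partial>M2) \<partial>M1) = (\<integral>y. (\<integral>x. F x y \<partial>M1) \<partial>M2)"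
proof -
  interpret pair_sigma_finite M1 M2 using assms(1,2) by (simp add: pair_sigma_finite_def)
  have "integrable (M1 \<Otimes>\<^sub>M M2) (\<lambda>(x,y). F x y)"
    by (rule Fubini_integrable) (use assms(3-5) in auto)
  then show ?thesis by (rule Fubini_integral[symmetric])
qed

lemma dom1_integrable: "integrable lborel (\<lambda>x::real. inverse (1 + x\<^sup>2))"
  using integrable_inverse_1_plus_square by (simp add: set_integrable_def)

definition domf :: "'a::euclidean_space \<Rightarrow> real" where
  "domf y = (\<Prod>b\<in>Basis. inverse (1 + (y \<bullet> b)\<^sup>2))"

lemma dom_integrable: "integrable lborel (domf :: 'a::euclidean_space \<Rightarrow> real)"
  unfolding domf_def[abs_def] by (rule lborel_prod(1)[where g="\<lambda>_ x. inverse (1 + x\<^sup>2)"]) (rule dom1_integrable)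

lemma dom_pos: "domf y > 0"
  unfolding domf_def by (intro prod_pos) (auto intro: add_pos_nonneg)

lemma prod_le_norm: "(\<Prod>b\<in>Basis. 1 + (y \<bullet> b)\<^sup>2) \<le> (1 + (norm (y::'a::euclidean_space))\<^sup>2) ^ DIM('a)"
proof -
  have "(\<Prod>b\<in>Basis. 1 + (y \<bullet> b)\<^sup>2) \<le> (\<Prod>b\<in>(Basis::'a set). 1 + (norm y)\<^sup>2)"
  proof (rule prod_mono, safe)
    fix b :: 'a assume b: "b \<in> Basis"
    show "0 \<le> 1 + (y \<bullet> b)\<^sup>2" by simp
    have "\<bar>y \<bullet> b\<bar> \<le> norm y" using Basis_le_norm[OF b] .
    then have "(y \<bullet> b)\<^sup>2 \<le> (norm y)\<^sup>2"
      by (metis abs_le_square_iff abs_norm_cancel)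
    then show "1 + (y \<bullet> b)\<^sup>2 \<le> 1 + (norm y)\<^sup>2" by simp
  qed
  then show ?thesis by simp
qed

lemma one_plus_pow: "(a::real) \<ge> 0 \<Longrightarrow> (1 + a) ^ n \<le> 2 ^ n * (1 + a ^ n)"
proof (cases "a \<le> 1")
  case True
  assume "a \<ge> 0"
  have "(1 + a) ^ n \<le> 2 ^ n" using True \<open>a \<ge> 0\<close> by (intro power_mono) auto
  also have "\<dots> \<le> 2 ^ n * (1 + a ^ n)" using \<open>a \<ge> 0\<close> by simp
  finally show ?thesis .
next
  case False
  assume "a \<ge> 0"
  have "(1 + a) ^ n \<le> (2 * a) ^ n" using False by (intro power_mono) auto
  also have "\<dots> \<le> 2 ^ n * (1 + a ^ n)" using \<open>a \<ge> 0\<close> by (simp add: power_mult_distrib)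
  finally show ?thesis .
qed

lemma rapid_bound: "rapid g \<Longrightarrow> \<exists>C. \<forall>y. norm (g y) \<le> C"
  unfolding rapid_def by (metis mult_1 power_0)

lemma rapid_measurable[measurable_dest]: "rapid g \<Longrightarrow> g \<in> borel_measurable borel"
  unfolding rapid_def by auto

lemma rapid_dom:
  assumes "rapid (g::'a::euclidean_space \<Rightarrow> complex)"
  shows "\<exists>K. \<forall>y. norm (g y) \<le> K * domf y"
proof -
  obtain C0 where C0: "\<And>y. norm y ^ 0 * norm (g y) \<le> C0" using assms unfolding rapid_def by blast
  obtain C1 where C1: "\<And>y. norm y ^ (2 * DIM('a)) * norm (g y) \<le> C1" using assms unfolding rapid_def by blast
  define K where "K = 2 ^ DIM('a) * (C0 + C1)"
  show ?thesis
  proof (intro exI allI)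
    fix y :: 'a
    let ?P = "\<Prod>b\<in>Basis. 1 + (y \<bullet> b)\<^sup>2"
    have P: "?P > 0" by (intro prod_pos) (auto intro: add_pos_nonneg)
    have "norm (g y) * ?P \<le> norm (g y) * (1 + (norm y)\<^sup>2) ^ DIM('a)"
      by (intro mult_left_mono prod_le_norm) auto
    also have "\<dots> \<le> norm (g y) * (2 ^ DIM('a) * (1 + ((norm y)\<^sup>2) ^ DIM('a)))"
      by (intro mult_left_mono one_plus_pow) auto
    also have "((norm y)\<^sup>2) ^ DIM('a) = norm y ^ (2 * DIM('a))" by (simp add: power_mult)
    also have "norm (g y) * (2 ^ DIM('a) * (1 + norm y ^ (2 * DIM('a)))) = 2 ^ DIM('a) * (norm y ^ 0 * norm (g y) + norm y ^ (2 * DIM('a)) * norm (g y))"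
      by (simp add: algebra_simps)
    also have "\<dots> \<le> K"
      unfolding K_def using C0[of y] C1[of y] by (intro mult_left_mono add_mono) auto
    finally have "norm (g y) * ?P \<le> K" .
    moreover have "domf y = inverse ?P"
      unfolding domf_def by (simp add: prod_inversef[symmetric] comp_def)
    ultimately show "norm (g y) \<le> K * domf y"
      using P by (simp add: field_simps)
  qed
qed

lemma rapid_integrable: "rapid g \<Longrightarrow> integrable lborel g"
proof -
  assume r: "rapid g"
  then obtain K where K: "\<And>y. norm (g y) \<le> K * domf y" using rapid_dom by blast
  show ?thesis
    by (rule Bochner_Integration.integrable_bound[where f="\<lambda>y. K * domf y"])
       (use r K dom_integrable dom_pos in \<open>auto intro: integrable_mult_right order_trans[OF K abs_ge_self]\<close>)
qed

lemma rapid_moment: "rapid g \<Longrightarrow> rapid (\<lambda>y. complex_of_real (norm y ^ k) * g y)"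
  unfolding rapid_def
proof safe
  fix m assume "g \<in> borel_measurable borel" and *: "\<forall>k. \<exists>C. \<forall>y. norm y ^ k * norm (g y) \<le> C"
  then show "(\<lambda>y. complex_of_real (norm y ^ k) * g y) \<in> borel_measurable borel" by measurable
  from * obtain C where "\<forall>y. norm y ^ (m + k) * norm (g y) \<le> C" by blast
  then show "\<exists>C. \<forall>y. norm y ^ m * norm (complex_of_real (norm y ^ k) * g y) \<le> C"
    by (intro exI[of _ C]) (simp add: norm_mult norm_power power_add mult.assoc)
qed

lemma rapid_moment_integrable:
  assumes "rapid g" shows "integrable lborel (\<lambda>y. norm y ^ k * norm (g y))"
proof -
  have "integrable lborel (\<lambda>y. norm (complex_of_real (norm y ^ k) * g y))"
    by (intro integrable_norm rapid_integrable rapid_moment assms)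
  then show ?thesis by (simp add: norm_mult norm_power)
qed

lemma pow_tri: "norm (y::'a::real_normed_vector) ^ k \<le> 2 ^ k * (norm z ^ k + norm (y - z) ^ k)"
proof -
  let ?a = "norm z" and ?b = "norm (y - z)"
  have "norm y \<le> ?a + ?b" using norm_triangle_ineq[of z "y - z"] by simp
  also have "\<dots> \<le> 2 * max ?a ?b" by simp
  finally have "norm y ^ k \<le> (2 * max ?a ?b) ^ k" by (intro power_mono) auto
  also have "\<dots> = 2 ^ k * max ?a ?b ^ k" by (simp add: power_mult_distrib)
  also have "max ?a ?b ^ k \<le> ?a ^ k + ?b ^ k"
    by (cases "?a \<le> ?b") (auto simp: max_def)
  finally show ?thesis by simp
qed

lemma conv_measurable:
  assumes [measurable]: "g \<in> borel_measurable borel" "h \<in> borel_measurable borel"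
  shows "conv g h \<in> borel_measurable borel"
proof -
  have "(\<lambda>(y, z). g z * h (y - z)) \<in> borel_measurable (lborel \<Otimes>\<^sub>M (lborel :: 'a measure))"
    by measurable
  then have "(\<lambda>y. \<integral>z. g z * h (y - z) \<partial>lborel) \<in> borel_measurable (lborel :: 'a measure)"
    by (rule lborel.borel_measurable_lebesgue_integral[where f="\<lambda>y z. g z * h (y - z)", simplified])
  then show ?thesis unfolding conv_def[abs_def] by simp
qed



lemma conv_rapid:
  fixes g h :: "'a::euclidean_space \<Rightarrow> complex"
  assumes g: "rapid g" and h: "rapid h"
  shows "rapid (conv g h)"
  unfolding rapid_def
proof safe
  note [measurable] = rapid_measurable[OF g] rapid_measurable[OF h]
  show "conv g h \<in> borel_measurable borel" by (rule conv_measurable) measurable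
  fix k
  obtain Bg where Bg: "\<And>y. norm (g y) \<le> Bg" using rapid_bound[OF g] by blast
  obtain Bh where Bh: "\<And>y. norm (h y) \<le> Bh" using rapid_bound[OF h] by blast
  have gi: "integrable lborel g" and hi: "integrable lborel h" using g h by (auto intro: rapid_integrable)
  define Ig where "Ig = (\<integral>z. norm z ^ k * norm (g z) \<partial>lborel)"
  define Ih where "Ih = (\<integral>z. norm z ^ k * norm (h z) \<partial>lborel)"
  have mg: "integrable lborel (\<lambda>z. norm z ^ k * norm (g z))" by (rule rapid_moment_integrable[OF g])
  have mh: "integrable lborel (\<lambda>z. norm z ^ k * norm (h z))" by (rule rapid_moment_integrable[OF h])
  show "\<exists>C. \<forall>y. norm y ^ k * norm (conv g h y) \<le> C"
  proof (intro exI allI)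
    fix y :: 'a
    have int1: "integrable lborel (\<lambda>z. norm y ^ k * (norm (g z) * norm (h (y - z))))"
      apply (intro integrable_mult_right)
      apply (rule Bochner_Integration.integrable_bound[where f="\<lambda>z. Bh * norm (g z)"])
        apply (intro integrable_mult_right integrable_norm gi)
       apply measurable
    proof (intro AE_I2)
      fix z
      have "norm (g z) * norm (h (y - z)) \<le> norm (g z) * \<bar>Bh\<bar>"
        using Bh[of "y - z"] by (intro mult_left_mono) auto
      then show "norm (norm (g z) * norm (h (y - z))) \<le> norm (Bh * norm (g z))"
        by (simp add: abs_mult mult.commute)
    qed
    have mh': "integrable lborel (\<lambda>z. norm (y - z) ^ k * norm (h (y - z)))"
      using integrable_reflect[OF mh, of y] by simp
    have int2: "integrable lborel (\<lambda>z. 2 ^ k * (Bh * (norm z ^ k * norm (g z)) + Bg * (norm (y - z) ^ k * norm (h (y - z)))))"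
      using Bochner_Integration.integrable_add[OF integrable_mult_right[OF mg, of Bh] integrable_mult_right[OF mh', of Bg]]
      by (rule integrable_mult_right)
    have "norm y ^ k * norm (conv g h y) \<le> norm y ^ k * (\<integral>z. norm (g z * h (y - z)) \<partial>lborel)"
      unfolding conv_def by (intro mult_left_mono integral_norm_bound) auto
    also have "\<dots> = (\<integral>z. norm y ^ k * (norm (g z) * norm (h (y - z))) \<partial>lborel)"
      by (simp add: norm_mult)
    also have "\<dots> \<le> (\<integral>z. 2 ^ k * (Bh * (norm z ^ k * norm (g z)) + Bg * (norm (y - z) ^ k * norm (h (y - z)))) \<partial>lborel)"
    proof (rule integral_mono[OF int1 int2])
      fix z
      let ?a = "norm (g z)" and ?b = "norm (h (y - z))"
      have a: "0 \<le> ?a" "?a \<le> Bg" using Bg by auto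
      have b: "0 \<le> ?b" "?b \<le> Bh" using Bh by auto
      have "norm y ^ k * (?a * ?b) \<le> (2 ^ k * (norm z ^ k + norm (y - z) ^ k)) * (?a * ?b)"
        by (intro mult_right_mono pow_tri) auto
      also have "\<dots> = 2 ^ k * ((norm z ^ k * ?a) * ?b + (norm (y - z) ^ k * ?b) * ?a)"
        by (simp add: algebra_simps)
      also have "\<dots> \<le> 2 ^ k * ((norm z ^ k * ?a) * Bh + (norm (y - z) ^ k * ?b) * Bg)"
        using a b by (intro mult_left_mono add_mono mult_left_mono) auto
      finally show "norm y ^ k * (?a * ?b) \<le> 2 ^ k * (Bh * (norm z ^ k * ?a) + Bg * (norm (y - z) ^ k * ?b))"
        by (simp add: algebra_simps)
    qed
    also have "\<dots> = 2 ^ k * (Bh * Ig + Bg * (\<integral>z. norm (y - z) ^ k * norm (h (y - z)) \<partial>lborel))"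
      unfolding Ig_def using mg mh' by simp
    also have "(\<integral>z. norm (y - z) ^ k * norm (h (y - z)) \<partial>lborel) = Ih"
      unfolding Ih_def by (rule integral_reflect[symmetric])
    finally show "norm y ^ k * norm (conv g h y) \<le> 2 ^ k * (Bh * Ig + Bg * Ih)" .
  qed
qed

lemma conv_fourier:
  fixes g h :: "'a::euclidean_space \<Rightarrow> complex"
  assumes g: "rapid g" and h: "rapid h"
  shows "fourier (conv g h) x = fourier g x * fourier h x"
proof -
  note [measurable] = rapid_measurable[OF g] rapid_measurable[OF h]
  have gi: "integrable lborel g" and hi: "integrable lborel h" using g h by (auto intro: rapid_integrable)
  have "fourier (conv g h) x = (\<integral>y. (\<integral>z. g z * h (y - z) * ee (x \<bullet> y) \<partial>lborel) \<partial>lborel)"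
    unfolding fourier_ee conv_def by simp
  also have "\<dots> = (\<integral>z. (\<integral>y. g z * h (y - z) * ee (x \<bullet> y) \<partial>lborel) \<partial>lborel)"
  proof (rule my_fubini[symmetric])
    show "sigma_finite_measure (lborel :: 'a measure)" by unfold_locales
    show "sigma_finite_measure (lborel :: 'a measure)" by unfold_locales
    show "(\<lambda>(z, y). g z * h (y - z) * ee (x \<bullet> y)) \<in> borel_measurable (lborel \<Otimes>\<^sub>M (lborel :: 'a measure))"
      by measurable
    have "integrable lborel (\<lambda>z. norm (g z) * (\<integral>y. norm (h y) \<partial>lborel))"
      by (intro integrable_mult_left integrable_norm gi)
    moreover have "(\<integral>y. norm (g z * h (y - z) * ee (x \<bullet> y)) \<partial>lborel) = norm (g z) * (\<integral>y. norm (h y) \<partial>lborel)" for z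
    proof -
      have "(\<integral>y. norm (g z * h (y - z) * ee (x \<bullet> y)) \<partial>lborel) = norm (g z) * (\<integral>y. norm (h (y - z)) \<partial>lborel)"
        by (simp add: norm_mult)
      also have "(\<integral>y. norm (h (y - z)) \<partial>lborel) = (\<integral>y. norm (h y) \<partial>lborel)"
        using integral_translate[of "\<lambda>y. norm (h (y - z))" z] by simp
      finally show ?thesis .
    qed
    ultimately show "integrable lborel (\<lambda>z. \<integral>y. norm (g z * h (y - z) * ee (x \<bullet> y)) \<partial>lborel)"
      by simp
    show "AE z in lborel. integrable lborel (\<lambda>y. g z * h (y - z) * ee (x \<bullet> y))"
    proof (intro AE_I2)
      fix z
      have "integrable lborel (\<lambda>y. h (y - z))" using integrable_translate[OF hi, of "-z"] by simp
      then have "integrable lborel (\<lambda>y. norm (g z) * norm (h (y - z)))"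
        by (intro integrable_mult_right integrable_norm)
      then show "integrable lborel (\<lambda>y. g z * h (y - z) * ee (x \<bullet> y))"
        apply (rule Bochner_Integration.integrable_bound)
         apply measurable
        by (simp add: norm_mult)
    qed
  qed
  also have "\<dots> = (\<integral>z. g z * ee (x \<bullet> z) * fourier h x \<partial>lborel)"
  proof (rule Bochner_Integration.integral_cong[OF refl])
    fix z
    have "(\<integral>y. g z * h (y - z) * ee (x \<bullet> y) \<partial>lborel) = (\<integral>y. g z * ee (x \<bullet> z) * (h (y - z) * ee (x \<bullet> (y - z))) \<partial>lborel)"
      by (intro Bochner_Integration.integral_cong refl) (simp add: inner_diff_right ee_add[symmetric] algebra_simps)
    also have "\<dots> = g z * ee (x \<bullet> z) * (\<integral>y. h (y - z) * ee (x \<bullet> (y - z)) \<partial>lborel)"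
      by simp
    also have "(\<integral>y. h (y - z) * ee (x \<bullet> (y - z)) \<partial>lborel) = fourier h x"
      unfolding fourier_ee using integral_translate[of "\<lambda>y. h (y - z) * ee (x \<bullet> (y - z))" z] by simp
    finally show "(\<integral>y. g z * h (y - z) * ee (x \<bullet> y) \<partial>lborel) = g z * ee (x \<bullet> z) * fourier h x" .
  qed
  also have "\<dots> = fourier g x * fourier h x"
    unfolding fourier_ee by simp
  finally show ?thesis .
qed



definition checkf :: "('a::euclidean_space \<Rightarrow> real) \<Rightarrow> 'a \<Rightarrow> complex" where
  "checkf f k = (\<integral>u. complex_of_real (f u) * ee (- (k \<bullet> u)) \<partial>lborel)"

lemma cnj_fourier: "cnj (fourier (\<lambda>x. complex_of_real (f x)) k) = checkf f k"
proof -
  have "cnj (fourier (\<lambda>x. complex_of_real (f x)) k) = (\<integral>x. cnj (complex_of_real (f x) * ee (k \<bullet> x)) \<partial>lborel)"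
    unfolding fourier_ee by (rule Bochner_Integration.integral_cnj[symmetric])
  then show ?thesis unfolding checkf_def by (simp add: cnj_ee)
qed

lemma gauss_scaled_ft:
  fixes w :: "'a::euclidean_space"
  assumes r: "r > 0"
  shows "(\<integral>k. complex_of_real (gauss (r *\<^sub>R k)) * ee (k \<bullet> w) \<partial>lborel)
         = complex_of_real ((1/r) ^ DIM('a) * gauss ((1/r) *\<^sub>R w))"
proof -
  have "(\<integral>k. complex_of_real (gauss (r *\<^sub>R k)) * ee (k \<bullet> w) \<partial>lborel)
      = \<bar>1/r\<bar> ^ DIM('a) *\<^sub>R (\<integral>v. complex_of_real (gauss (r *\<^sub>R (0 + (1/r) *\<^sub>R v))) * ee ((0 + (1/r) *\<^sub>R v) \<bullet> w) \<partial>lborel)"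
    by (rule integral_affine_eucl) (use r in simp)
  also have "(\<lambda>v. complex_of_real (gauss (r *\<^sub>R (0 + (1/r) *\<^sub>R v))) * ee ((0 + (1/r) *\<^sub>R v) \<bullet> w))
      = (\<lambda>v. complex_of_real (gauss v) * ee (v \<bullet> ((1/r) *\<^sub>R w)))"
    using r by (simp add: inner_commute)
  also have "(\<integral>v. complex_of_real (gauss v) * ee (v \<bullet> ((1/r) *\<^sub>R w)) \<partial>lborel) = complex_of_real (gauss ((1/r) *\<^sub>R w))"
    by (rule gauss_ft(2))
  finally show ?thesis using r by (simp add: scaleR_conv_of_real)
qed

lemma gauss_scaled_integrable:
  assumes r: "r \<noteq> 0"
  shows "integrable lborel (\<lambda>k::'a::euclidean_space. gauss (r *\<^sub>R k))"
  using integrable_affine_eucl[OF gauss_integrable r, of 0] by simp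

lemma inv_step:
  fixes f :: "'a::euclidean_space \<Rightarrow> real"
  assumes fi: "integrable lborel f" and fb: "\<And>x. \<bar>f x\<bar> \<le> B" and r: "r > 0"
  shows "(\<integral>k. checkf f k * complex_of_real (gauss (r *\<^sub>R k)) * ee (k \<bullet> y) \<partial>lborel)
       = (\<integral>v. complex_of_real (f (y + r *\<^sub>R v) * gauss v) \<partial>lborel)"
proof -
  note [measurable] = borel_measurable_integrable[OF fi]
  let ?F = "\<lambda>k u. complex_of_real (f u) * ee (- (k \<bullet> u)) * complex_of_real (gauss (r *\<^sub>R k)) * ee (k \<bullet> y)"
  have "(\<integral>k. checkf f k * complex_of_real (gauss (r *\<^sub>R k)) * ee (k \<bullet> y) \<partial>lborel)
      = (\<integral>k. (\<integral>u. ?F k u \<partial>lborel) \<partial>lborel)"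
    unfolding checkf_def by simp
  also have "\<dots> = (\<integral>u. (\<integral>k. ?F k u \<partial>lborel) \<partial>lborel)"
  proof (rule my_fubini)
    show "sigma_finite_measure (lborel :: 'a measure)" by unfold_locales
    show "sigma_finite_measure (lborel :: 'a measure)" by unfold_locales
    show "(\<lambda>(k, u). ?F k u) \<in> borel_measurable (lborel \<Otimes>\<^sub>M (lborel :: 'a measure))"
      by measurable
    have "(\<integral>u. norm (?F k u) \<partial>lborel) = gauss (r *\<^sub>R k) * (\<integral>u. norm (f u) \<partial>lborel)" for k
      using gauss_pos[of "r *\<^sub>R k"] by (simp add: norm_mult)
    moreover have "integrable lborel (\<lambda>k. gauss (r *\<^sub>R k) * (\<integral>u. norm (f u) \<partial>lborel))"
      by (intro integrable_mult_left gauss_scaled_integrable) (use r in auto)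
    ultimately show "integrable lborel (\<lambda>k. \<integral>u. norm (?F k u) \<partial>lborel)" by simp
    show "AE k in lborel. integrable lborel (?F k)"
    proof (intro AE_I2)
      fix k
      have "integrable lborel (\<lambda>u. norm (f u))" using fi by auto
      then show "integrable lborel (?F k)"
        apply (rule Bochner_Integration.integrable_bound)
         apply measurable
        using gauss_le1[of "r *\<^sub>R k"] gauss_pos[of "r *\<^sub>R k"]
        by (auto simp: norm_mult intro!: mult_left_le)
    qed
  qed
  also have "\<dots> = (\<integral>u. complex_of_real (f u) * complex_of_real ((1/r) ^ DIM('a) * gauss ((1/r) *\<^sub>R (y - u))) \<partial>lborel)"
  proof (rule Bochner_Integration.integral_cong[OF refl])
    fix u
    have "(\<integral>k. ?F k u \<partial>lborel) = (\<integral>k. complex_of_real (f u) * (complex_of_real (gauss (r *\<^sub>R k)) * ee (k \<bullet> (y - u))) \<partial>lborel)"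
      by (intro Bochner_Integration.integral_cong refl)
         (simp add: inner_diff_right ee_add[symmetric] algebra_simps)
    also have "\<dots> = complex_of_real (f u) * (\<integral>k. complex_of_real (gauss (r *\<^sub>R k)) * ee (k \<bullet> (y - u)) \<partial>lborel)"
      by (rule integral_mult_right_zero)
    also have "\<dots> = complex_of_real (f u) * complex_of_real ((1/r) ^ DIM('a) * gauss ((1/r) *\<^sub>R (y - u)))"
      by (simp only: gauss_scaled_ft[OF r])
    finally show "(\<integral>k. ?F k u \<partial>lborel) = complex_of_real (f u) * complex_of_real ((1/r) ^ DIM('a) * gauss ((1/r) *\<^sub>R (y - u)))" .
  qed
  also have "\<dots> = \<bar>r\<bar> ^ DIM('a) *\<^sub>R (\<integral>v. complex_of_real (f (y + r *\<^sub>R v)) * complex_of_real ((1/r) ^ DIM('a) * gauss ((1/r) *\<^sub>R (y - (y + r *\<^sub>R v)))) \<partial>lborel)"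
    by (rule integral_affine_eucl) (use r in simp)
  also have "\<dots> = (\<integral>v. complex_of_real (f (y + r *\<^sub>R v) * gauss v) \<partial>lborel)"
  proof -
    have "(\<lambda>v. complex_of_real (f (y + r *\<^sub>R v)) * complex_of_real ((1/r) ^ DIM('a) * gauss ((1/r) *\<^sub>R (y - (y + r *\<^sub>R v)))))
        = (\<lambda>v. complex_of_real ((1/r) ^ DIM('a)) * complex_of_real (f (y + r *\<^sub>R v) * gauss v))"
      using r by (auto simp: gauss_minus)
    then show ?thesis using r
      by (simp add: scaleR_conv_of_real power_divide)
  qed
  finally show ?thesis .
qed



lemma line_deriv:
  fixes h :: "'a::euclidean_space \<Rightarrow> real"
  assumes hd: "\<And>x. h differentiable (at x)"
  shows "((\<lambda>s. h (x + s *\<^sub>R b)) has_real_derivative frechet_derivative h (at (x + s *\<^sub>R b)) b) (at s)"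
proof -
  let ?y = "x + s *\<^sub>R b"
  let ?D = "frechet_derivative h (at ?y)"
  have D: "(h has_derivative ?D) (at ?y)" using hd frechet_derivative_works by blast
  have p: "((\<lambda>s. x + s *\<^sub>R b) has_derivative (\<lambda>u. u *\<^sub>R b)) (at s)"
    by (auto intro!: derivative_eq_intros)
  have "((h \<circ> (\<lambda>s. x + s *\<^sub>R b)) has_derivative (?D \<circ> (\<lambda>u. u *\<^sub>R b))) (at s)"
    by (rule diff_chain_at[OF p]) (use D in simp)
  moreover have "(?D \<circ> (\<lambda>u. u *\<^sub>R b)) = (*) (?D b)"
    using linear.scaleR[OF has_derivative_linear[OF D]] by (auto simp: fun_eq_iff mult.commute)
  ultimately show ?thesis
    unfolding has_field_derivative_def comp_def by simp
qed

lemma line_FTC: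
  fixes h :: "'a::euclidean_space \<Rightarrow> real"
  assumes hd: "\<And>x. h differentiable (at x)"
    and gc: "\<And>x. isCont (\<lambda>x. frechet_derivative h (at x) b) x"
    and t: "0 \<le> t"
  shows "(\<integral>s. indicator {0..t} s *\<^sub>R frechet_derivative h (at (x + s *\<^sub>R b)) b \<partial>lborel) = h (x + t *\<^sub>R b) - h x"
proof -
  have "(\<integral>s. indicator {0..t} s *\<^sub>R frechet_derivative h (at (x + s *\<^sub>R b)) b \<partial>lborel)
      = h (x + t *\<^sub>R b) - h (x + 0 *\<^sub>R b)"
  proof (rule integral_FTC_atLeastAtMost[OF t])
    fix s assume "0 \<le> s" "s \<le> t"
    show "((\<lambda>s. h (x + s *\<^sub>R b)) has_vector_derivative frechet_derivative h (at (x + s *\<^sub>R b)) b) (at s within {0..t})"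
      using line_deriv[OF hd, of x b s]
      by (simp add: has_real_derivative_iff_has_vector_derivative has_vector_derivative_at_within)
  next
    have "isCont (\<lambda>s. frechet_derivative h (at (x + s *\<^sub>R b)) b) s" for s
      by (rule isCont_o2[OF _ gc]) (intro continuous_intros)
    then show "continuous_on {0..t} (\<lambda>s. frechet_derivative h (at (x + s *\<^sub>R b)) b)"
      by (intro continuous_at_imp_continuous_on) auto
  qed
  then show ?thesis by simp
qed

lemma ee_half: "ee (1/2) = -1" "ee (-(1/2)) = -1"
  unfolding ee_def by (simp_all add: exp_eq_polar cis_conv_exp[symmetric] cis.ctr complex_eq_iff)

lemma checkf_translate:
  fixes h :: "'a::euclidean_space \<Rightarrow> real"
  shows "(\<integral>x. complex_of_real (h (x + c)) * ee (- (k \<bullet> x)) \<partial>lborel) = ee (k \<bullet> c) * checkf h k"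
proof -
  have "(\<integral>x. complex_of_real (h (x + c)) * ee (- (k \<bullet> x)) \<partial>lborel)
      = (\<integral>x. complex_of_real (h (- c + x + c)) * ee (- (k \<bullet> (- c + x))) \<partial>lborel)"
    using integral_translate[of "\<lambda>x. complex_of_real (h (x + c)) * ee (- (k \<bullet> x))" "- c"] by (simp add: add.assoc)
  also have "\<dots> = (\<integral>x. ee (k \<bullet> c) * (complex_of_real (h x) * ee (- (k \<bullet> x))) \<partial>lborel)"
    by (intro Bochner_Integration.integral_cong refl) (simp add: inner_add_right ee_add[symmetric] algebra_simps)
  also have "\<dots> = ee (k \<bullet> c) * checkf h k"
    unfolding checkf_def by (rule integral_mult_right_zero)
  finally show ?thesis .
qed

lemma decay_step:
  fixes h :: "'a::euclidean_space \<Rightarrow> real"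
  assumes hd: "\<And>x. h differentiable (at x)"
    and gc: "\<And>x. isCont (\<lambda>x. frechet_derivative h (at x) b) x"
    and hi: "integrable lborel h"
    and gi: "integrable lborel (\<lambda>x. frechet_derivative h (at x) b)"
  shows "\<bar>k \<bullet> b\<bar> * norm (checkf h k) \<le> norm (checkf (\<lambda>x. frechet_derivative h (at x) b) k) / 4"
proof (cases "k \<bullet> b = 0")
  case True then show ?thesis by simp
next
  case False
  define a where "a = k \<bullet> b"
  define G where "G = (\<lambda>x. frechet_derivative h (at x) b)"
  note [measurable] = borel_measurable_integrable[OF hi] borel_measurable_integrable[OF gi[folded G_def]]
  have a0: "a \<noteq> 0" using False a_def by simp
  define t where "t = 1 / (2 * \<bar>a\<bar>)"
  have t0: "t > 0" using a0 t_def by simp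
  have eta: "ee (t * a) = -1"
  proof (cases "a > 0")
    case True then have E: "t * a = 1/2" unfolding t_def by simp
    show ?thesis unfolding E by (rule ee_half(1))
  next
    case False then have E: "t * a = -(1/2)" using a0 unfolding t_def by simp
    show ?thesis unfolding E by (rule ee_half(2))
  qed
  define F where "F x s = complex_of_real (indicator {0..t} s * G (x + s *\<^sub>R b)) * ee (- (k \<bullet> x))" for x s
  have hti: "integrable lborel (\<lambda>x. h (x + t *\<^sub>R b))"
    using integrable_translate[OF hi, of "t *\<^sub>R b"] by (simp add: add.commute)
  have int_a: "integrable lborel (\<lambda>x. complex_of_real (h (x + t *\<^sub>R b)) * ee (- (k \<bullet> x)))"
    by (rule Bochner_Integration.integrable_bound[OF integrable_norm[OF hti]]) (auto simp: norm_mult)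
  have int_b: "integrable lborel (\<lambda>x. complex_of_real (h x) * ee (- (k \<bullet> x)))"
    by (rule Bochner_Integration.integrable_bound[OF integrable_norm[OF hi]]) (auto simp: norm_mult)
  have "(ee (t * a) - 1) * checkf h k
      = (\<integral>x. complex_of_real (h (x + t *\<^sub>R b)) * ee (- (k \<bullet> x)) \<partial>lborel) - (\<integral>x. complex_of_real (h x) * ee (- (k \<bullet> x)) \<partial>lborel)"
    unfolding checkf_translate by (simp add: a_def algebra_simps checkf_def)
  also have "\<dots> = (\<integral>x. complex_of_real (h (x + t *\<^sub>R b) - h x) * ee (- (k \<bullet> x)) \<partial>lborel)"
    by (subst Bochner_Integration.integral_diff[OF int_a int_b, symmetric]) (simp add: algebra_simps)
  also have "\<dots> = (\<integral>x. (\<integral>s. F x s \<partial>lborel) \<partial>lborel)"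
  proof (intro Bochner_Integration.integral_cong refl)
    fix x
    have "(\<integral>s. F x s \<partial>lborel) = complex_of_real (\<integral>s. indicator {0..t} s * G (x + s *\<^sub>R b) \<partial>lborel) * ee (- (k \<bullet> x))"
      unfolding F_def by (simp only: integral_mult_left_zero integral_complex_of_real)
    also have "(\<integral>s. indicator {0..t} s * G (x + s *\<^sub>R b) \<partial>lborel) = h (x + t *\<^sub>R b) - h x"
      using line_FTC[OF hd gc, of t x] t0 unfolding G_def by simp
    finally show "complex_of_real (h (x + t *\<^sub>R b) - h x) * ee (- (k \<bullet> x)) = (\<integral>s. F x s \<partial>lborel)" by simp
  qed
  also have "\<dots> = (\<integral>s. (\<integral>x. F x s \<partial>lborel) \<partial>lborel)"
  proof (rule my_fubini[where F="\<lambda>s x. F x s", symmetric])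
    show "sigma_finite_measure (lborel :: 'a measure)" by unfold_locales
    show "sigma_finite_measure (lborel :: real measure)" by unfold_locales
    show "(\<lambda>(s, x). F x s) \<in> borel_measurable (lborel \<Otimes>\<^sub>M (lborel :: 'a measure))"
      unfolding F_def by measurable
    have Gt: "integrable lborel (\<lambda>x. G (x + s *\<^sub>R b))" for s
      using integrable_translate[OF gi[folded G_def], of "s *\<^sub>R b"] by (simp add: add.commute)
    have "(\<integral>x. norm (F x s) \<partial>lborel) = indicator {0..t} s * (\<integral>x. norm (G x) \<partial>lborel)" for s
    proof -
      have "(\<integral>x. norm (F x s) \<partial>lborel) = indicator {0..t} s * (\<integral>x. norm (G (x + s *\<^sub>R b)) \<partial>lborel)"
        unfolding F_def by (simp add: norm_mult abs_mult)
      also have "(\<integral>x. norm (G (x + s *\<^sub>R b)) \<partial>lborel) = (\<integral>x. norm (G x) \<partial>lborel)"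
        using integral_translate[of "\<lambda>x. norm (G x)" "s *\<^sub>R b"] by (simp add: add.commute)
      finally show ?thesis .
    qed
    moreover have "integrable lborel (\<lambda>s::real. indicator {0..t} s * (\<integral>x. norm (G x) \<partial>lborel))"
      by (intro integrable_mult_left integrable_real_indicator) (use t0 in auto)
    ultimately show "integrable lborel (\<lambda>s. \<integral>x. norm (F x s) \<partial>lborel)" by simp
    show "AE s in lborel. integrable lborel (\<lambda>x. F x s)"
    proof (intro AE_I2)
      fix s
      show "integrable lborel (\<lambda>x. F x s)"
        unfolding F_def
        by (rule Bochner_Integration.integrable_bound[OF integrable_norm[OF Gt[of s]]])
           (auto simp: norm_mult abs_mult indicator_def)
    qed
  qed
  also have "\<dots> = (\<integral>s. indicator {0..t} s * ee (s * a) * checkf G k \<partial>lborel)"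
  proof (intro Bochner_Integration.integral_cong refl)
    fix s :: real
    have "(\<integral>x. F x s \<partial>lborel) = indicator {0..t} s * (\<integral>x. complex_of_real (G (x + s *\<^sub>R b)) * ee (- (k \<bullet> x)) \<partial>lborel)"
      unfolding F_def by (simp add: mult.assoc split: split_indicator)
    also have "\<dots> = indicator {0..t} s * ee (s * a) * checkf G k"
      unfolding checkf_translate by (simp add: a_def mult.assoc)
    finally show "(\<integral>x. F x s \<partial>lborel) = indicator {0..t} s * ee (s * a) * checkf G k" .
  qed
  finally have eq: "(ee (t * a) - 1) * checkf h k = (\<integral>s. indicator {0..t} s * ee (s * a) * checkf G k \<partial>lborel)" .
  have "2 * norm (checkf h k) = norm ((ee (t * a) - 1) * checkf h k)"
    unfolding eta by (simp add: norm_mult)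
  also have "\<dots> \<le> (\<integral>s. norm (indicator {0..t} s * ee (s * a) * checkf G k) \<partial>lborel)"
    unfolding eq by (rule integral_norm_bound)
  also have "\<dots> = (\<integral>s. indicator {0..t} s * norm (checkf G k) \<partial>lborel)"
  proof -
    have "\<And>s. norm (indicator {0..t} s :: complex) = indicator {0..t} s"
      by (simp split: split_indicator)
    then show ?thesis by (simp add: norm_mult)
  qed
  also have "\<dots> = t * norm (checkf G k)"
    using t0 by simp
  finally have "2 * norm (checkf h k) \<le> t * norm (checkf G k)" .
  then have "2 * \<bar>a\<bar> * norm (checkf h k) \<le> (2 * \<bar>a\<bar>) * t * norm (checkf G k) / 2"
    using a0 by (simp add: mult.assoc mult_left_mono)
  also have "(2 * \<bar>a\<bar>) * t = 1" unfolding t_def using a0 by simp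
  finally show ?thesis unfolding G_def a_def by simp
qed



lemma isCont_gauss: "isCont gauss (x::'a::euclidean_space)"
  using continuous_gauss[of "UNIV::'a set"] continuous_on_eq_continuous_at[of "UNIV::'a set" gauss] by blast

lemma fourier_inversion:
  fixes f :: "'a::euclidean_space \<Rightarrow> real"
  assumes fi: "integrable lborel f" and fc: "\<And>x. isCont f x" and fb: "\<And>x. \<bar>f x\<bar> \<le> B"
    and ci: "integrable lborel (checkf f)"
  shows "(\<integral>k. checkf f k * ee (k \<bullet> y) \<partial>lborel) = complex_of_real (f y)"
proof -
  note [measurable] = borel_measurable_integrable[OF fi]
  have [measurable]: "checkf f \<in> borel_measurable borel"
    using borel_measurable_integrable[OF ci] by simp
  define r where "r j = inverse (real (Suc j))" for j
  have rpos: "r j > 0" for j unfolding r_def by simp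
  have rlim: "r \<longlonglongrightarrow> 0" unfolding r_def by (rule LIMSEQ_inverse_real_of_nat)
  have L1: "(\<lambda>j. \<integral>k. checkf f k * complex_of_real (gauss (r j *\<^sub>R k)) * ee (k \<bullet> y) \<partial>lborel)
        \<longlonglongrightarrow> (\<integral>k. checkf f k * ee (k \<bullet> y) \<partial>lborel)"
  proof (rule integral_dominated_convergence[where w="\<lambda>k. norm (checkf f k)"])
    show "(\<lambda>k. checkf f k * ee (k \<bullet> y)) \<in> borel_measurable lborel" by measurable
    show "(\<lambda>k. checkf f k * complex_of_real (gauss (r j *\<^sub>R k)) * ee (k \<bullet> y)) \<in> borel_measurable lborel" for j
      by measurable
    show "integrable lborel (\<lambda>k. norm (checkf f k))" using ci by auto
    show "AE k in lborel. (\<lambda>j. checkf f k * complex_of_real (gauss (r j *\<^sub>R k)) * ee (k \<bullet> y))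
        \<longlonglongrightarrow> checkf f k * ee (k \<bullet> y)"
    proof (intro AE_I2)
      fix k :: 'a
      have "(\<lambda>j. gauss (r j *\<^sub>R k)) \<longlonglongrightarrow> gauss (0 *\<^sub>R k)"
        by (intro isCont_tendsto_compose[OF isCont_gauss] tendsto_intros rlim)
      then have "(\<lambda>j. checkf f k * complex_of_real (gauss (r j *\<^sub>R k)) * ee (k \<bullet> y))
        \<longlonglongrightarrow> checkf f k * complex_of_real (gauss (0 *\<^sub>R k)) * ee (k \<bullet> y)"
        by (intro tendsto_intros)
      then show "(\<lambda>j. checkf f k * complex_of_real (gauss (r j *\<^sub>R k)) * ee (k \<bullet> y))
        \<longlonglongrightarrow> checkf f k * ee (k \<bullet> y)" by simp
    qed
    show "AE k in lborel. norm (checkf f k * complex_of_real (gauss (r j *\<^sub>R k)) * ee (k \<bullet> y)) \<le> norm (checkf f k)" for j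
    proof (intro AE_I2)
      fix k
      show "norm (checkf f k * complex_of_real (gauss (r j *\<^sub>R k)) * ee (k \<bullet> y)) \<le> norm (checkf f k)"
        using gauss_le1[of "r j *\<^sub>R k"] gauss_pos[of "r j *\<^sub>R k"]
        by (simp add: norm_mult mult_left_le)
    qed
  qed
  have L2: "(\<lambda>j. \<integral>v. complex_of_real (f (y + r j *\<^sub>R v) * gauss v) \<partial>lborel)
        \<longlonglongrightarrow> (\<integral>v. complex_of_real (f y * gauss (v::'a)) \<partial>lborel)"
  proof (rule integral_dominated_convergence[where w="\<lambda>v::'a. B * gauss v"])
    show "(\<lambda>v. complex_of_real (f y * gauss (v::'a))) \<in> borel_measurable lborel" by measurable
    show "(\<lambda>v. complex_of_real (f (y + r j *\<^sub>R v) * gauss v)) \<in> borel_measurable lborel" for j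
      by measurable
    show "integrable lborel (\<lambda>v. B * gauss v)" by (intro integrable_mult_right gauss_integrable)
    show "AE v in lborel. (\<lambda>j. complex_of_real (f (y + r j *\<^sub>R v) * gauss v))
        \<longlonglongrightarrow> complex_of_real (f y * gauss v)"
    proof (intro AE_I2)
      fix v :: 'a
      have "(\<lambda>j. f (y + r j *\<^sub>R v)) \<longlonglongrightarrow> f (y + 0 *\<^sub>R v)"
        by (intro isCont_tendsto_compose[OF fc] tendsto_intros rlim)
      then show "(\<lambda>j. complex_of_real (f (y + r j *\<^sub>R v) * gauss v)) \<longlonglongrightarrow> complex_of_real (f y * gauss v)"
        by (auto intro!: tendsto_intros)
    qed
    show "AE v in lborel. norm (complex_of_real (f (y + r j *\<^sub>R v) * gauss v)) \<le> B * gauss v" for j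
    proof (intro AE_I2)
      fix v
      show "norm (complex_of_real (f (y + r j *\<^sub>R v) * gauss v)) \<le> B * gauss v"
      proof -
        have g0: "0 \<le> gauss v" using gauss_pos[of v] by simp
        have "\<bar>f (y + r j *\<^sub>R v)\<bar> * gauss v \<le> B * gauss v" by (rule mult_right_mono[OF fb g0])
        moreover have "norm (complex_of_real (f (y + r j *\<^sub>R v) * gauss v)) = \<bar>f (y + r j *\<^sub>R v)\<bar> * gauss v"
          unfolding norm_of_real abs_mult using g0 by simp
        ultimately show ?thesis by simp
      qed
    qed
  qed
  have G: "(\<integral>v. complex_of_real (f y * gauss (v::'a)) \<partial>lborel) = complex_of_real (f y)"
  proof -
    have "(\<integral>v. complex_of_real (f y * gauss (v::'a)) \<partial>lborel) = complex_of_real (\<integral>v. f y * gauss (v::'a) \<partial>lborel)"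
      by simp
    also have "(\<integral>v. f y * gauss (v::'a) \<partial>lborel) = f y"
      by (simp add: gauss_integral)
    finally show ?thesis .
  qed
  have E: "(\<lambda>j. \<integral>k. checkf f k * complex_of_real (gauss (r j *\<^sub>R k)) * ee (k \<bullet> y) \<partial>lborel)
      = (\<lambda>j. \<integral>v. complex_of_real (f (y + r j *\<^sub>R v) * gauss v) \<partial>lborel)"
    using inv_step[OF fi fb rpos] by simp
  have "(\<lambda>j. \<integral>v. complex_of_real (f (y + r j *\<^sub>R v) * gauss v) \<partial>lborel) \<longlonglongrightarrow> (\<integral>k. checkf f k * ee (k \<bullet> y) \<partial>lborel)"
    using L1 unfolding E .
  from LIMSEQ_unique[OF this L2] show ?thesis unfolding G .
qed



lemma smooth_iter:
  assumes "smooth_bdd_int f" "vs \<in> lists Basis"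
  shows "\<And>x. iter_pd vs f differentiable (at x)" "bounded (range (iter_pd vs f))" "integrable lborel (iter_pd vs f)"
  using assms unfolding smooth_bdd_int_def by auto

lemma decay_basis:
  assumes sf: "smooth_bdd_int f" and b: "b \<in> Basis"
  shows "vs \<in> lists Basis \<Longrightarrow> \<exists>C. \<forall>k. \<bar>k \<bullet> b\<bar> ^ m * norm (checkf (iter_pd vs f) k) \<le> C"
proof (induction m arbitrary: vs)
  case 0
  let ?h = "iter_pd vs f"
  have "norm (checkf ?h k) \<le> (\<integral>u. \<bar>?h u\<bar> \<partial>lborel)" for k
  proof -
    have "norm (checkf ?h k) \<le> (\<integral>u. norm (complex_of_real (?h u) * ee (- (k \<bullet> u))) \<partial>lborel)"
      unfolding checkf_def by (rule integral_norm_bound)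
    then show ?thesis by (simp add: norm_mult)
  qed
  then show ?case by auto
next
  case (Suc m)
  let ?h = "iter_pd vs f"
  have bvs: "b # vs \<in> lists Basis" using Suc.prems b by simp
  obtain C where C: "\<And>k. \<bar>k \<bullet> b\<bar> ^ m * norm (checkf (iter_pd (b # vs) f) k) \<le> C"
    using Suc.IH[OF bvs] by blast
  have G: "iter_pd (b # vs) f = (\<lambda>x. frechet_derivative ?h (at x) b)" by simp
  have hd: "\<And>x. ?h differentiable (at x)" using smooth_iter[OF sf Suc.prems] by blast
  have gd: "\<And>x. iter_pd (b # vs) f differentiable (at x)" using smooth_iter[OF sf bvs] by blast
  have gc: "\<And>x. isCont (\<lambda>x. frechet_derivative ?h (at x) b) x"
    using gd unfolding G by (simp add: differentiable_imp_continuous_within)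
  have hi: "integrable lborel ?h" using smooth_iter[OF sf Suc.prems] by blast
  have gi: "integrable lborel (\<lambda>x. frechet_derivative ?h (at x) b)"
    using smooth_iter[OF sf bvs] unfolding G by blast
  show ?case
  proof (intro exI allI)
    fix k
    have "\<bar>k \<bullet> b\<bar> ^ Suc m * norm (checkf ?h k) = \<bar>k \<bullet> b\<bar> ^ m * (\<bar>k \<bullet> b\<bar> * norm (checkf ?h k))"
      by (simp add: mult.assoc mult.commute mult.left_commute)
    also have "\<dots> \<le> \<bar>k \<bullet> b\<bar> ^ m * (norm (checkf (iter_pd (b # vs) f) k) / 4)"
      unfolding G by (intro mult_left_mono decay_step[OF hd gc hi gi]) auto
    also have "\<dots> = (\<bar>k \<bullet> b\<bar> ^ m * norm (checkf (iter_pd (b # vs) f) k)) / 4" by simp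
    also have "\<dots> \<le> C / 4" using C[of k] by simp
    finally show "\<bar>k \<bullet> b\<bar> ^ Suc m * norm (checkf ?h k) \<le> C / 4" .
  qed
qed

lemma checkf_measurable:
  assumes [measurable]: "f \<in> borel_measurable borel"
  shows "checkf f \<in> borel_measurable borel"
proof -
  have "(\<lambda>(k, u). complex_of_real (f u) * ee (- (k \<bullet> u))) \<in> borel_measurable (lborel \<Otimes>\<^sub>M (lborel :: 'a measure))"
    by measurable
  then have "(\<lambda>k. \<integral>u. complex_of_real (f u) * ee (- (k \<bullet> u)) \<partial>lborel) \<in> borel_measurable (lborel :: 'a measure)"
    by (rule lborel.borel_measurable_lebesgue_integral[where f="\<lambda>k u. complex_of_real (f u) * ee (- (k \<bullet> u))", simplified])
  then show ?thesis unfolding checkf_def[abs_def] by simp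
qed

lemma norm_pow_le_sum:
  "norm (k::'a::euclidean_space) ^ m \<le> real DIM('a) ^ m * (\<Sum>b\<in>Basis. \<bar>k \<bullet> b\<bar> ^ m)"
proof -
  obtain b0 where b0: "b0 \<in> Basis" "\<And>b. b \<in> Basis \<Longrightarrow> \<bar>k \<bullet> b\<bar> \<le> \<bar>k \<bullet> b0\<bar>"
    using Max_in[of "(\<lambda>b. \<bar>k \<bullet> b\<bar>) ` Basis"] Max_ge[of "(\<lambda>b. \<bar>k \<bullet> b\<bar>) ` Basis"]
    by (metis (no_types, lifting) empty_is_image finite_Basis finite_imageI image_eqI imageE nonempty_Basis)
  have "norm k \<le> (\<Sum>b\<in>Basis. \<bar>k \<bullet> b\<bar>)" by (rule norm_le_l1)
  also have "\<dots> \<le> (\<Sum>b\<in>(Basis::'a set). \<bar>k \<bullet> b0\<bar>)" by (intro sum_mono b0(2))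
  also have "\<dots> = real DIM('a) * \<bar>k \<bullet> b0\<bar>" by simp
  finally have "norm k ^ m \<le> (real DIM('a) * \<bar>k \<bullet> b0\<bar>) ^ m" by (intro power_mono) auto
  also have "\<dots> = real DIM('a) ^ m * \<bar>k \<bullet> b0\<bar> ^ m" by (simp add: power_mult_distrib)
  also have "\<bar>k \<bullet> b0\<bar> ^ m \<le> (\<Sum>b\<in>Basis. \<bar>k \<bullet> b\<bar> ^ m)"
    by (rule member_le_sum[OF b0(1)]) auto
  finally show ?thesis by simp
qed

lemma rapid_checkf:
  assumes sf: "smooth_bdd_int (f :: 'a::euclidean_space \<Rightarrow> real)"
  shows "rapid (checkf f)"
  unfolding rapid_def
proof safe
  have "integrable lborel f" using smooth_iter[OF sf, of "[]"] by simp
  then show "checkf f \<in> borel_measurable borel"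
    by (intro checkf_measurable) (simp add: borel_measurable_integrable)
  fix m
  have "\<forall>b\<in>Basis. \<exists>C. \<forall>k. \<bar>k \<bullet> b\<bar> ^ m * norm (checkf f k) \<le> C"
    using decay_basis[OF sf, of _ "[]" m] by simp
  then obtain C where C: "\<And>b k. b \<in> Basis \<Longrightarrow> \<bar>k \<bullet> b\<bar> ^ m * norm (checkf f k) \<le> C b"
    by metis
  show "\<exists>C. \<forall>k. norm k ^ m * norm (checkf f k) \<le> C"
  proof (intro exI allI)
    fix k :: 'a
    have "norm k ^ m * norm (checkf f k) \<le> real DIM('a) ^ m * (\<Sum>b\<in>Basis. \<bar>k \<bullet> b\<bar> ^ m) * norm (checkf f k)"
      by (intro mult_right_mono norm_pow_le_sum) auto
    also have "\<dots> = real DIM('a) ^ m * (\<Sum>b\<in>Basis. \<bar>k \<bullet> b\<bar> ^ m * norm (checkf f k))"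
      by (simp add: sum_distrib_right mult.assoc)
    also have "\<dots> \<le> real DIM('a) ^ m * (\<Sum>b\<in>Basis. C b)"
      by (intro mult_left_mono sum_mono C) auto
    finally show "norm k ^ m * norm (checkf f k) \<le> real DIM('a) ^ m * (\<Sum>b\<in>Basis. C b)" .
  qed
qed



lemma charfun_measurable:
  assumes M: "prob_space M" and X[measurable]: "\<xi> \<in> borel_measurable M"
  shows "charfun M \<xi> \<in> borel_measurable borel"
proof -
  interpret prob_space M by (rule M)
  have "(\<lambda>(t, \<omega>). ee (t \<bullet> \<xi> \<omega>)) \<in> borel_measurable (lborel \<Otimes>\<^sub>M M)"
    by measurable
  then have "(\<lambda>t. \<integral>\<omega>. ee (t \<bullet> \<xi> \<omega>) \<partial>M) \<in> borel_measurable lborel"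
    by (rule borel_measurable_lebesgue_integral[where f="\<lambda>t \<omega>. ee (t \<bullet> \<xi> \<omega>)", simplified])
  then show ?thesis unfolding charfun_ee[abs_def] by simp
qed

lemma charfun_bound:
  assumes M: "prob_space M"
  shows "norm (charfun M \<xi> t) \<le> 1"
proof -
  interpret prob_space M by (rule M)
  have "norm (charfun M \<xi> t) \<le> (\<integral>\<omega>. norm (ee (t \<bullet> \<xi> \<omega>)) \<partial>M)"
    unfolding charfun_ee by (rule integral_norm_bound)
  also have "\<dots> = 1" by (simp add: prob_space)
  finally show ?thesis .
qed

lemma base:
  fixes f :: "'a::euclidean_space \<Rightarrow> real"
  assumes sf: "smooth_bdd_int f" and M: "prob_space M" and X[measurable]: "\<xi> \<in> borel_measurable M"
  shows "rapid (\<lambda>k. cnj (fourier (\<lambda>x. complex_of_real (f x)) k) * charfun M \<xi> k)"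
    and "fourier (\<lambda>k. cnj (fourier (\<lambda>x. complex_of_real (f x)) k) * charfun M \<xi> k) x
          = complex_of_real (\<integral>\<omega>. f (x + \<xi> \<omega>) \<partial>M)"
proof -
  interpret prob_space M by (rule M)
  have eqs: "(\<lambda>k. cnj (fourier (\<lambda>x. complex_of_real (f x)) k) * charfun M \<xi> k) = (\<lambda>k. checkf f k * charfun M \<xi> k)"
    by (simp add: cnj_fourier)
  have rc: "rapid (checkf f)" by (rule rapid_checkf[OF sf])
  note [measurable] = rapid_measurable[OF rc] charfun_measurable[OF M X]
  show "rapid (\<lambda>k. cnj (fourier (\<lambda>x. complex_of_real (f x)) k) * charfun M \<xi> k)"
    unfolding eqs rapid_def
  proof safe
    show "(\<lambda>k. checkf f k * charfun M \<xi> k) \<in> borel_measurable borel" by measurable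
    fix m
    obtain C where C: "\<And>k. norm k ^ m * norm (checkf f k) \<le> C" using rc unfolding rapid_def by blast
    show "\<exists>C. \<forall>k. norm k ^ m * norm (checkf f k * charfun M \<xi> k) \<le> C"
    proof (intro exI allI)
      fix k
      have "norm k ^ m * norm (checkf f k * charfun M \<xi> k) \<le> norm k ^ m * norm (checkf f k) * 1"
        unfolding norm_mult mult.assoc by (intro mult_left_mono charfun_bound[OF M]) auto
      also have "\<dots> \<le> C" using C[of k] by simp
      finally show "norm k ^ m * norm (checkf f k * charfun M \<xi> k) \<le> C" .
    qed
  qed
  have fi: "integrable lborel f" and fd: "\<And>x. f differentiable (at x)" and fbd: "bounded (range f)"
    using smooth_iter[OF sf, of "[]"] by auto
  note [measurable] = borel_measurable_integrable[OF fi]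
  obtain B where B: "\<And>x. \<bar>f x\<bar> \<le> B" using fbd unfolding bounded_iff by auto
  have fc: "\<And>x. isCont f x" using fd by (simp add: differentiable_imp_continuous_within)
  have ci: "integrable lborel (checkf f)" by (rule rapid_integrable[OF rc])
  have "fourier (\<lambda>k. checkf f k * charfun M \<xi> k) x = (\<integral>k. (\<integral>\<omega>. checkf f k * ee (k \<bullet> (x + \<xi> \<omega>)) \<partial>M) \<partial>lborel)"
    unfolding fourier_ee charfun_ee
  proof (intro Bochner_Integration.integral_cong refl)
    fix k
    have "(\<integral>\<omega>. checkf f k * ee (k \<bullet> (x + \<xi> \<omega>)) \<partial>M) = (\<integral>\<omega>. checkf f k * ee (x \<bullet> k) * ee (k \<bullet> \<xi> \<omega>) \<partial>M)"
      by (intro Bochner_Integration.integral_cong refl) (simp add: inner_add_right ee_add inner_commute algebra_simps)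
    then show "checkf f k * (\<integral>\<omega>. ee (k \<bullet> \<xi> \<omega>) \<partial>M) * ee (x \<bullet> k) = (\<integral>\<omega>. checkf f k * ee (k \<bullet> (x + \<xi> \<omega>)) \<partial>M)"
      by (simp add: algebra_simps) metis
  qed
  also have "\<dots> = (\<integral>\<omega>. (\<integral>k. checkf f k * ee (k \<bullet> (x + \<xi> \<omega>)) \<partial>lborel) \<partial>M)"
  proof (rule my_fubini)
    show "sigma_finite_measure (lborel :: 'a measure)" by unfold_locales
    show "sigma_finite_measure M" by unfold_locales
    show "(\<lambda>(k, \<omega>). checkf f k * ee (k \<bullet> (x + \<xi> \<omega>))) \<in> borel_measurable (lborel \<Otimes>\<^sub>M M)"
      by measurable
    have "(\<integral>\<omega>. norm (checkf f k * ee (k \<bullet> (x + \<xi> \<omega>))) \<partial>M) = norm (checkf f k)" for k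
      by (simp add: norm_mult prob_space)
    then show "integrable lborel (\<lambda>k. \<integral>\<omega>. norm (checkf f k * ee (k \<bullet> (x + \<xi> \<omega>))) \<partial>M)"
      using integrable_norm[OF ci] by simp
    show "AE k in lborel. integrable M (\<lambda>\<omega>. checkf f k * ee (k \<bullet> (x + \<xi> \<omega>)))"
    proof (intro AE_I2)
      fix k
      show "integrable M (\<lambda>\<omega>. checkf f k * ee (k \<bullet> (x + \<xi> \<omega>)))"
        by (rule integrable_const_bound[where B="norm (checkf f k)"]) (auto simp: norm_mult)
    qed
  qed
  also have "\<dots> = (\<integral>\<omega>. complex_of_real (f (x + \<xi> \<omega>)) \<partial>M)"
    by (intro Bochner_Integration.integral_cong refl fourier_inversion[OF fi fc B ci])
  also have "\<dots> = complex_of_real (\<integral>\<omega>. f (x + \<xi> \<omega>) \<partial>M)" by simp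
  finally show "fourier (\<lambda>k. cnj (fourier (\<lambda>x. complex_of_real (f x)) k) * charfun M \<xi> k) x
          = complex_of_real (\<integral>\<omega>. f (x + \<xi> \<omega>) \<partial>M)" unfolding eqs .
qed

lemma bigconv_main:
  fixes g :: "nat \<Rightarrow> 'a::euclidean_space \<Rightarrow> complex" and P :: "nat \<Rightarrow> 'a \<Rightarrow> complex"
  assumes r: "\<And>i. i \<in> {1..n} \<Longrightarrow> rapid (g i)"
    and F: "\<And>i x. i \<in> {1..n} \<Longrightarrow> fourier (g i) x = P i x"
  shows "1 \<le> m \<Longrightarrow> m \<le> n \<Longrightarrow> rapid (bigconv g m) \<and> (\<forall>x. fourier (bigconv g m) x = (\<Prod>i=1..m. P i x))"
proof (induction m rule: nat_induct_at_least)
  case base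
  then show ?case using r[of 1] F[of 1] by simp
next
  case (Suc m)
  then obtain m' where m': "m = Suc m'" by (cases m) auto
  have IH: "rapid (bigconv g m)" "\<And>x. fourier (bigconv g m) x = (\<Prod>i=1..m. P i x)"
    using Suc by auto
  have rS: "rapid (g (Suc m))" and FS: "\<And>x. fourier (g (Suc m)) x = P (Suc m) x"
    using Suc.prems r F by auto
  have eq: "bigconv g (Suc m) = conv (g (Suc m)) (bigconv g m)" using m' by simp
  show ?case unfolding eq
  proof safe
    show "rapid (conv (g (Suc m)) (bigconv g m))" by (rule conv_rapid[OF rS IH(1)])
    fix x
    show "fourier (conv (g (Suc m)) (bigconv g m)) x = (\<Prod>i=1..Suc m. P i x)"
      using conv_fourier[OF rS IH(1)] IH(2) FS Suc.hyps by (simp add: prod.nat_ivl_Suc' mult.commute)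
  qed
qed

theorem lemma6p1:
  fixes n :: nat and f :: "nat \<Rightarrow> 'a::euclidean_space \<Rightarrow> real"
    and M :: "'w measure" and \<xi> :: "'w \<Rightarrow> 'a" and s :: "'a \<Rightarrow> complex"
  assumes "n \<ge> 1"
    and "\<And>i. i \<in> {1..n} \<Longrightarrow> smooth_bdd_int (f i)"
    and "\<And>i. i \<in> {1..n} \<Longrightarrow> \<exists>C. \<forall>x. \<bar>f i x\<bar> \<le> C / (1 + norm x ^ (2 * DIM('a)))"
    and "prob_space M"
    and "\<xi> \<in> borel_measurable M"
    and "s = bigconv (\<lambda>i k. cnj (fourier (\<lambda>x. complex_of_real (f i x)) k) * charfun M \<xi> k) n"
  shows "integrable lborel s
    \<and> (\<forall>x. fourier s x = (\<Prod>i=1..n. complex_of_real (\<integral>\<omega>. f i (x + \<xi> \<omega>) \<partial>M)))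
    \<and> (\<forall>k::nat. bdd_above ((\<lambda>y. norm y ^ k * norm (s y)) ` UNIV))"
proof -
  let ?g = "\<lambda>i k. cnj (fourier (\<lambda>x. complex_of_real (f i x)) k) * charfun M \<xi> k"
  have main: "rapid s \<and> (\<forall>x. fourier s x = (\<Prod>i=1..n. complex_of_real (\<integral>\<omega>. f i (x + \<xi> \<omega>) \<partial>M)))"
  proof -
    have r: "\<And>i. i \<in> {1..n} \<Longrightarrow> rapid (?g i)"
      using base(1)[OF assms(2) assms(4) assms(5)] by blast
    have F: "\<And>i x. i \<in> {1..n} \<Longrightarrow> fourier (?g i) x = complex_of_real (\<integral>\<omega>. f i (x + \<xi> \<omega>) \<partial>M)"
      using base(2)[OF assms(2) assms(4) assms(5)] by blast
    show ?thesis unfolding assms(6)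
      using bigconv_main[of n ?g "\<lambda>i x. complex_of_real (\<integral>\<omega>. f i (x + \<xi> \<omega>) \<partial>M)", OF r F assms(1) order_refl]
      by blast
  qed
  have "integrable lborel s" using main rapid_integrable by blast
  moreover have "bdd_above ((\<lambda>y. norm y ^ k * norm (s y)) ` UNIV)" for k
  proof -
    obtain C where "\<And>y. norm y ^ k * norm (s y) \<le> C" using main unfolding rapid_def by blast
    then show ?thesis by (intro bdd_aboveI2[where M=C]) auto
  qed
  ultimately show ?thesis using main by blast
qed


end
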